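(* Let $\Gamma_1,\Gamma_2\subseteq\{0,1\}^\infty$. If a learning function $l_1$ uniformly weakly detects that every $X\in\Gamma_1$ is patterned and a learning function $l_2$ uniformly weakly detects that every $X\in\Gamma_2$ is patterned, then there exists a learning function $l_3$ that uniformly weakly detects that every $X\in\Gamma_1\cup\Gamma_2$ is patterned. Moreover, if $l_1$ and $l_2$ are computable, then $l_3$ can be chosen computable.
   Context: A learning function is a function $l:\{0,1\}^*\to\{\mathrm{yes},\mathrm{no}\}$. $Y\upharpoonright m$ is the length-$m$ prefix of $Y$; $\lambda$ is the uniform (Lebesgue) measure on $\{0,1\}^\infty$. A learning function $l$ uniformly weakly detects that $X$ is patterned iff (i) $l(X\upharpoonright m)=\mathrm{yes}$ for infinitely many $m$, and (ii) for all $n\in\mathbb N$, $\lambda(\{Y : \#\{m: l(Y\upharpoonright m)=\mathrm{yes}\}\ge n\})\le 2^{-n}$. *)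

theory Defs
  imports "HOL-Probability.Probability"
begin

text \<open>Infinite binary sequences are modelled as nat \<Rightarrow> bool, finite binary strings as
  bool list. A learning function is a map bool list \<Rightarrow> bool (True = yes, False = no).\<close>

type_synonym learning_function = "bool list \<Rightarrow> bool"

definition prefix_of :: "(nat \<Rightarrow> bool) \<Rightarrow> nat \<Rightarrow> bool list" where
  "prefix_of Y m = map Y [0..<m]"

definition cantor_measure :: "(nat \<Rightarrow> bool) measure" where
  "cantor_measure = PiM UNIV (\<lambda>_. measure_pmf (bernoulli_pmf (1/2)))"

definition yes_at_least :: "learning_function \<Rightarrow> nat \<Rightarrow> (nat \<Rightarrow> bool) \<Rightarrow> bool" where
  "yes_at_least l n Y \<longleftrightarrow>
     infinite {m. l (prefix_of Y m)} \<or> n \<le> card {m. l (prefix_of Y m)}"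

definition uniformly_weakly_detects :: "learning_function \<Rightarrow> (nat \<Rightarrow> bool) set \<Rightarrow> bool" where
  "uniformly_weakly_detects l \<Gamma> \<longleftrightarrow>
     (\<forall>X\<in>\<Gamma>. infinite {m. l (prefix_of X m)}) \<and>
     (\<forall>n::nat. emeasure cantor_measure {Y. yes_at_least l n Y} \<le> ennreal ((1/2) ^ n))"

datatype recf = Zero | Succ | Proj nat | Comp recf "recf list" | Prim recf recf | Mini recf

inductive eval_rf :: "recf \<Rightarrow> nat list \<Rightarrow> nat \<Rightarrow> bool" where
  zero: "eval_rf Zero xs 0"
| succ: "eval_rf Succ (x # xs) (Suc x)"
| proj: "i < length xs \<Longrightarrow> eval_rf (Proj i) xs (xs ! i)"
| comp: "list_all2 (\<lambda>g y. eval_rf g xs y) gs ys \<Longrightarrow> eval_rf f ys z \<Longrightarrow> eval_rf (Comp f gs) xs z"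
| prim0: "eval_rf f xs z \<Longrightarrow> eval_rf (Prim f g) (0 # xs) z"
| primS: "eval_rf (Prim f g) (y # xs) v \<Longrightarrow> eval_rf g (y # v # xs) z
           \<Longrightarrow> eval_rf (Prim f g) (Suc y # xs) z"
| mini: "eval_rf f (y # xs) 0 \<Longrightarrow> (\<forall>z<y. \<exists>v>0. eval_rf f (z # xs) v)
           \<Longrightarrow> eval_rf (Mini f) xs y"
monos list.rel_mono

text \<open>Bijective binary encoding of bool lists into nat.\<close>
fun encode_bits :: "bool list \<Rightarrow> nat" where
  "encode_bits [] = 0"
| "encode_bits (b # bs) = 2 * encode_bits bs + (if b then 2 else 1)"

definition computable_lf :: "learning_function \<Rightarrow> bool" where
  "computable_lf l \<longleftrightarrow>
     (\<exists>r. \<forall>\<sigma>. eval_rf r [encode_bits \<sigma>] (if l \<sigma> then 1 else 0))"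

end

theory Submission
  imports Defs
begin


lemma meas_comp: "(\<lambda>Y. Y i) \<in> measurable cantor_measure (count_space UNIV)"
proof -
  have "(\<lambda>Y. Y i) \<in> measurable cantor_measure (measure_pmf (bernoulli_pmf (1/2)))"
    unfolding cantor_measure_def by (rule measurable_component_singleton) simp
  then show ?thesis by (simp add: measurable_def)
qed

lemma meas_prefix: "(\<lambda>Y. prefix_of Y m) \<in> measurable cantor_measure (count_space UNIV)"
proof (induction m)
  case 0
  then show ?case by (simp add: prefix_of_def)
next
  case (Suc m)
  have eq: "(\<lambda>Y. prefix_of Y (Suc m)) = (\<lambda>Y. (\<lambda>s Y. s @ [Y m]) (prefix_of Y m) Y)"
    by (simp add: prefix_of_def)
  show ?case unfolding eq
    apply (rule measurable_compose_countable[OF _ Suc])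
    apply (rule measurable_compose[OF meas_comp[of m]])
    by simp
qed

lemma meas_pred: "{Y. P (prefix_of Y m)} \<in> sets cantor_measure"
proof -
  have "{Y. P (prefix_of Y m)} = (\<lambda>Y. prefix_of Y m) -` {s. P s} \<inter> space cantor_measure"
    by (simp add: cantor_measure_def space_PiM)
  also have "\<dots> \<in> sets cantor_measure" using meas_prefix by (rule measurable_sets) simp
  finally show ?thesis .
qed

lemma prob: "prob_space cantor_measure"
  unfolding cantor_measure_def by (rule prob_space_PiM) (simp add: prob_space_measure_pmf)



definition Nc :: "learning_function \<Rightarrow> (nat \<Rightarrow> bool) \<Rightarrow> nat \<Rightarrow> nat" where
  "Nc l Y K = card {k. k < K \<and> l (prefix_of Y k)}"

definition cnt :: "learning_function \<Rightarrow> bool list \<Rightarrow> nat \<Rightarrow> nat" where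
  "cnt l s K = card {k. k < K \<and> l (take k s)}"

definition l3f :: "learning_function \<Rightarrow> learning_function \<Rightarrow> learning_function" where
  "l3f l1 l2 s = (max (cnt l1 s (length s)) (cnt l2 s (length s))
      < max (cnt l1 s (Suc (length s))) (cnt l2 s (Suc (length s)))
    \<and> 2 \<le> max (cnt l1 s (Suc (length s))) (cnt l2 s (Suc (length s))))"

lemma take_prefix: "k \<le> m \<Longrightarrow> take k (prefix_of Y m) = prefix_of Y k"
  by (simp add: prefix_of_def take_map min_def)

lemma length_prefix[simp]: "length (prefix_of Y m) = m"
  by (simp add: prefix_of_def)

lemma cnt_prefix: "K \<le> Suc m \<Longrightarrow> cnt l (prefix_of Y m) K = Nc l Y K"
  unfolding cnt_def Nc_def
  by (rule arg_cong[where f=card]) (auto simp: take_prefix)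

lemma l3f_prefix: "l3f l1 l2 (prefix_of Y m) \<longleftrightarrow>
   max (Nc l1 Y m) (Nc l2 Y m) < max (Nc l1 Y (Suc m)) (Nc l2 Y (Suc m)) \<and>
   2 \<le> max (Nc l1 Y (Suc m)) (Nc l2 Y (Suc m))"
  unfolding l3f_def by (simp add: cnt_prefix)

lemma Nc_mono: "K \<le> K' \<Longrightarrow> Nc l Y K \<le> Nc l Y K'"
  unfolding Nc_def by (rule card_mono) auto

lemma Nc_0[simp]: "Nc l Y 0 = 0" by (simp add: Nc_def)

lemma yes_iff: "yes_at_least l n Y \<longleftrightarrow> (\<exists>m. n \<le> Nc l Y m)"
proof
  assume h: "yes_at_least l n Y"
  let ?S = "{m. l (prefix_of Y m)}"
  show "\<exists>m. n \<le> Nc l Y m"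
  proof (cases "finite ?S")
    case True
    then have c: "n \<le> card ?S" using h by (simp add: yes_at_least_def)
    have "?S \<subseteq> {k. k < Suc (Max ?S) \<and> l (prefix_of Y k)}"
      using True by (auto simp: le_imp_less_Suc)
    then have "card ?S \<le> Nc l Y (Suc (Max ?S))" unfolding Nc_def
      by (intro card_mono) auto
    then show ?thesis using c by (meson order.trans)
  next
    case False
    then obtain T where T: "T \<subseteq> ?S" "finite T" "card T = n"
      using infinite_arbitrarily_large by blast
    have "T \<subseteq> {k. k < Suc (Max T) \<and> l (prefix_of Y k)}"
      using T by (auto simp: le_imp_less_Suc)
    then have "card T \<le> Nc l Y (Suc (Max T))" unfolding Nc_def
      by (intro card_mono) auto
    then show ?thesis using T by auto
  qed
next
  assume "\<exists>m. n \<le> Nc l Y m"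
  then obtain m where m: "n \<le> Nc l Y m" by blast
  show "yes_at_least l n Y"
  proof (cases "finite {m. l (prefix_of Y m)}")
    case True
    have "Nc l Y m \<le> card {m. l (prefix_of Y m)}" unfolding Nc_def
      using True by (intro card_mono) auto
    then show ?thesis using m by (simp add: yes_at_least_def)
  next
    case False
    then show ?thesis by (simp add: yes_at_least_def)
  qed
qed

lemma meas_yes: "{Y. yes_at_least l n Y} \<in> sets cantor_measure"
proof -
  define Q where "Q m s = (n \<le> card {k. k < m \<and> l (take k s)})" for m s
  have "{Y. yes_at_least l n Y} = (\<Union>m. {Y. Q m (prefix_of Y m)})"
    by (auto simp: yes_iff Nc_def take_prefix Q_def cong: conj_cong)
  also have "\<dots> \<in> sets cantor_measure"
    using meas_pred by (intro sets.countable_UN) auto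
  finally show ?thesis .
qed

lemma unbounded: "infinite {m. l (prefix_of Y m)} \<Longrightarrow> \<exists>K. B < Nc l Y K"
  using yes_iff[of l "Suc B" Y] by (auto simp: yes_at_least_def Suc_le_eq)

lemma key_inf:
  assumes "\<And>B. \<exists>K. B < max (Nc l1 Y K) (Nc l2 Y K)"
  shows "infinite {m. l3f l1 l2 (prefix_of Y m)}"
proof -
  define G where "G K = max (Nc l1 Y K) (Nc l2 Y K)" for K
  have Gm: "K \<le> K' \<Longrightarrow> G K \<le> G K'" for K K'
    unfolding G_def using Nc_mono by (meson max.mono)
  have G0: "G 0 = 0" by (simp add: G_def)
  show ?thesis unfolding infinite_nat_iff_unbounded_le
  proof
    fix B
    define c where "c = max (G B) 1"
    obtain K where K: "c < G K" using assms unfolding G_def by blast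
    have "K \<noteq> 0" using K G0 by (metis less_nat_zero_code)
    then have ex: "\<exists>j. c < G (Suc j)" using K by (cases K) auto
    define m where "m = (LEAST j. c < G (Suc j))"
    have P: "c < G (Suc m)" unfolding m_def by (rule LeastI_ex[OF ex])
    have mB: "B \<le> m"
    proof (rule ccontr)
      assume "\<not> B \<le> m"
      then have "G (Suc m) \<le> G B" by (intro Gm) auto
      then show False using P by (simp add: c_def)
    qed
    have Gmc: "G m \<le> c"
    proof (cases m)
      case 0 then show ?thesis using G0 by simp
    next
      case (Suc j)
      then have "j < m" by simp
      then have "\<not> c < G (Suc j)" unfolding m_def by (rule not_less_Least)
      then show ?thesis using Suc by simp
    qed
    have "l3f l1 l2 (prefix_of Y m)"
      unfolding l3f_prefix G_def[symmetric] using P Gmc unfolding c_def by linarith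
    then show "\<exists>m\<ge>B. m \<in> {m. l3f l1 l2 (prefix_of Y m)}" using mB by blast
  qed
qed

lemma key_cnt:
  assumes "1 \<le> n" "yes_at_least (l3f l1 l2) n Y"
  shows "yes_at_least l1 (Suc n) Y \<or> yes_at_least l2 (Suc n) Y"
proof -
  define G where "G K = max (Nc l1 Y K) (Nc l2 Y K)" for K
  have Gm: "K \<le> K' \<Longrightarrow> G K \<le> G K'" for K K'
    unfolding G_def using Nc_mono by (meson max.mono)
  let ?S = "{m. l3f l1 l2 (prefix_of Y m)}"
  have "\<exists>T. T \<subseteq> ?S \<and> finite T \<and> card T = n"
  proof (cases "finite ?S")
    case True
    then have "n \<le> card ?S" using assms by (simp add: yes_at_least_def)
    then show ?thesis using obtain_subset_with_card_n by metis
  next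
    case False then show ?thesis using infinite_arbitrarily_large by blast
  qed
  then obtain T where T: "T \<subseteq> ?S" "finite T" "card T = n" by blast
  have Tne: "T \<noteq> {}" using T assms by auto
  have yes: "m \<in> T \<Longrightarrow> G m < G (Suc m) \<and> 2 \<le> G (Suc m)" for m
    using T(1) unfolding G_def by (auto simp: l3f_prefix)
  let ?h = "\<lambda>m. G (Suc m)"
  have inj: "inj_on ?h T"
  proof (rule inj_onI)
    fix a b assume ab: "a \<in> T" "b \<in> T" "G (Suc a) = G (Suc b)"
    show "a = b"
    proof (rule ccontr)
      assume "a \<noteq> b"
      then consider "a < b" | "b < a" by linarith
      then show False
      proof cases
        case 1
        then have "G (Suc a) \<le> G b" by (intro Gm) auto
        then show False using yes[OF ab(2)] ab(3) by simp
      next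
        case 2
        then have "G (Suc b) \<le> G a" by (intro Gm) auto
        then show False using yes[OF ab(1)] ab(3) by simp
      qed
    qed
  qed
  define X where "X = G (Suc (Max T))"
  have sub: "?h ` T \<subseteq> {2..X}"
  proof
    fix v assume "v \<in> ?h ` T"
    then obtain m where m: "m \<in> T" "v = G (Suc m)" by blast
    have "m \<le> Max T" using T(2) m by simp
    then have "v \<le> X" unfolding X_def m by (intro Gm) simp
    then show "v \<in> {2..X}" using yes[OF m(1)] m by simp
  qed
  have "n = card (?h ` T)" using card_image[OF inj] T by simp
  also have "\<dots> \<le> card {2..X}" using sub by (intro card_mono) auto
  finally have "Suc n \<le> X" using assms by simp
  then show ?thesis unfolding yes_iff X_def G_def by (metis max_def)
qed



lemma detect:
  assumes "uniformly_weakly_detects l1 \<Gamma>1" "uniformly_weakly_detects l2 \<Gamma>2"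
  shows "uniformly_weakly_detects (l3f l1 l2) (\<Gamma>1 \<union> \<Gamma>2)"
  unfolding uniformly_weakly_detects_def
proof (intro conjI ballI allI)
  fix X assume "X \<in> \<Gamma>1 \<union> \<Gamma>2"
  then show "infinite {m. l3f l1 l2 (prefix_of X m)}"
  proof
    assume "X \<in> \<Gamma>1"
    then have "infinite {m. l1 (prefix_of X m)}" using assms(1) by (simp add: uniformly_weakly_detects_def)
    then show ?thesis using unbounded by (intro key_inf) (metis max.strict_coboundedI1)
  next
    assume "X \<in> \<Gamma>2"
    then have "infinite {m. l2 (prefix_of X m)}" using assms(2) by (simp add: uniformly_weakly_detects_def)
    then show ?thesis using unbounded by (intro key_inf) (metis max.strict_coboundedI2)
  qed
next
  fix n :: nat
  interpret P: prob_space cantor_measure by (rule prob)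
  show "emeasure cantor_measure {Y. yes_at_least (l3f l1 l2) n Y} \<le> ennreal ((1 / 2) ^ n)"
  proof (cases "n = 0")
    case True then show ?thesis using P.emeasure_le_1 by simp
  next
    case False
    have "{Y. yes_at_least (l3f l1 l2) n Y} \<subseteq> {Y. yes_at_least l1 (Suc n) Y} \<union> {Y. yes_at_least l2 (Suc n) Y}"
      using key_cnt[of n] False by auto
    then have "emeasure cantor_measure {Y. yes_at_least (l3f l1 l2) n Y}
        \<le> emeasure cantor_measure ({Y. yes_at_least l1 (Suc n) Y} \<union> {Y. yes_at_least l2 (Suc n) Y})"
      by (intro emeasure_mono) (auto intro: meas_yes)
    also have "\<dots> \<le> emeasure cantor_measure {Y. yes_at_least l1 (Suc n) Y} + emeasure cantor_measure {Y. yes_at_least l2 (Suc n) Y}"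
      by (intro emeasure_subadditive meas_yes)
    also have "\<dots> \<le> ennreal ((1/2)^Suc n) + ennreal ((1/2)^Suc n)"
      using assms unfolding uniformly_weakly_detects_def by (intro add_mono) (metis, metis)
    also have "\<dots> = ennreal ((1/2)^n)"
      by (simp add: ennreal_plus[symmetric] del: ennreal_plus)
    finally show ?thesis .
  qed
qed



definition prc :: "nat \<Rightarrow> (nat list \<Rightarrow> nat) \<Rightarrow> bool" where
  "prc n f \<longleftrightarrow> (\<exists>r. \<forall>xs. length xs = n \<longrightarrow> eval_rf r xs (f xs))"

lemma prc_cong: "prc n f \<Longrightarrow> (\<And>xs. length xs = n \<Longrightarrow> f xs = g xs) \<Longrightarrow> prc n g"
  unfolding prc_def by metis

lemma prc_zero: "prc n (\<lambda>_. 0)"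
  unfolding prc_def by (metis eval_rf.zero)

lemma prc_proj: "i < n \<Longrightarrow> prc n (\<lambda>xs. xs ! i)"
  unfolding prc_def by (metis eval_rf.proj)

lemma prc_list:
  assumes "\<forall>g\<in>set gs. prc n g"
  shows "\<exists>rs. \<forall>xs. length xs = n \<longrightarrow> list_all2 (\<lambda>r y. eval_rf r xs y) rs (map (\<lambda>g. g xs) gs)"
  using assms
proof (induction gs)
  case Nil then show ?case by auto
next
  case (Cons g gs)
  then obtain rs where rs: "\<forall>xs. length xs = n \<longrightarrow> list_all2 (\<lambda>r y. eval_rf r xs y) rs (map (\<lambda>g. g xs) gs)"
    by auto
  obtain r where r: "\<forall>xs. length xs = n \<longrightarrow> eval_rf r xs (g xs)" using Cons.prems unfolding prc_def by auto
  show ?case using rs r by (intro exI[of _ "r # rs"]) auto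
qed

lemma prc_comp:
  assumes "prc (length gs) h" "\<forall>g\<in>set gs. prc n g"
  shows "prc n (\<lambda>xs. h (map (\<lambda>g. g xs) gs))"
proof -
  obtain rs where rs: "\<forall>xs. length xs = n \<longrightarrow> list_all2 (\<lambda>r y. eval_rf r xs y) rs (map (\<lambda>g. g xs) gs)"
    using prc_list[OF assms(2)] by blast
  obtain rh where rh: "\<forall>xs. length xs = length gs \<longrightarrow> eval_rf rh xs (h xs)" using assms(1) unfolding prc_def by auto
  show ?thesis unfolding prc_def
    by (rule exI[of _ "Comp rh rs"]) (auto intro!: eval_rf.comp rs[rule_format] rh[rule_format])
qed

lemma prc_comp1: "prc 1 h \<Longrightarrow> prc n g \<Longrightarrow> prc n (\<lambda>xs. h [g xs])"
  using prc_comp[of "[g]" h n] by simp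

lemma prc_comp2: "prc 2 h \<Longrightarrow> prc n g1 \<Longrightarrow> prc n g2 \<Longrightarrow> prc n (\<lambda>xs. h [g1 xs, g2 xs])"
  using prc_comp[of "[g1, g2]" h n] by (simp add: numeral_2_eq_2)

lemma prc_succ1: "prc 1 (\<lambda>xs. Suc (xs ! 0))"
  unfolding prc_def
proof (intro exI[of _ Succ] allI impI)
  fix xs :: "nat list" assume "length xs = 1"
  then obtain x where "xs = [x]" by (metis One_nat_def length_0_conv length_Suc_conv)
  then show "eval_rf Succ xs (Suc (xs ! 0))" by (simp add: eval_rf.succ)
qed

lemma prc_Suc: "prc n g \<Longrightarrow> prc n (\<lambda>xs. Suc (g xs))"
  using prc_comp1[OF prc_succ1] by simp

lemma prc_const: "prc n (\<lambda>_. c)"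
  by (induction c) (auto intro: prc_zero prc_Suc)

lemma prc_prim:
  assumes "prc n f" "prc (Suc (Suc n)) g"
    and "\<And>xs. length xs = n \<Longrightarrow> F 0 xs = f xs"
    and "\<And>k xs. length xs = n \<Longrightarrow> F (Suc k) xs = g (k # F k xs # xs)"
  shows "prc (Suc n) (\<lambda>ys. F (hd ys) (tl ys))"
proof -
  obtain rf where rf: "\<forall>xs. length xs = n \<longrightarrow> eval_rf rf xs (f xs)" using assms(1) unfolding prc_def by auto
  obtain rg where rg: "\<forall>xs. length xs = Suc (Suc n) \<longrightarrow> eval_rf rg xs (g xs)" using assms(2) unfolding prc_def by auto
  have *: "length xs = n \<Longrightarrow> eval_rf (Prim rf rg) (y # xs) (F y xs)" for y xs
  proof (induction y)
    case 0 then show ?case using rf assms(3) by (auto intro: eval_rf.prim0)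
  next
    case (Suc y)
    then show ?case using rg assms(4) by (auto intro: eval_rf.primS)
  qed
  show ?thesis unfolding prc_def
  proof (intro exI[of _ "Prim rf rg"] allI impI)
    fix ys :: "nat list" assume "length ys = Suc n"
    then obtain y xs where "ys = y # xs" "length xs = n" by (metis length_Suc_conv)
    then show "eval_rf (Prim rf rg) ys (F (hd ys) (tl ys))" using * by simp
  qed
qed

lemma len1: "length ys = 1 \<Longrightarrow> ys = [ys ! 0]"
  by (metis One_nat_def length_0_conv length_Suc_conv nth_Cons_0)
lemma len2: "length ys = 2 \<Longrightarrow> ys = [ys ! 0, ys ! 1]"
  by (cases ys; cases "tl ys"; auto simp: numeral_2_eq_2)

lemma prc_rec1:
  assumes "prc 2 (\<lambda>ys. S (ys!0) (ys!1))" "F 0 = c" "\<And>k. F (Suc k) = S k (F k)"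
  shows "prc 1 (\<lambda>ys. F (ys!0))"
proof -
  have "prc (Suc 0) (\<lambda>ys. (\<lambda>k (xs::nat list). F k) (hd ys) (tl ys))"
    by (rule prc_prim[of 0 "\<lambda>_. c" "\<lambda>ys. S (ys!0) (ys!1)"])
       (use assms in \<open>auto intro: prc_const simp: numeral_2_eq_2\<close>)
  then have h: "prc 1 (\<lambda>ys. F (hd ys))" by simp
  show ?thesis by (rule prc_cong[OF h]) (metis len1 list.sel(1) nth_Cons_0)
qed

lemma prc_rec2:
  assumes "prc 1 (\<lambda>ys. B (ys!0))" "prc 3 (\<lambda>ys. S (ys!0) (ys!1) (ys!2))"
    "\<And>x. F 0 x = B x" "\<And>k x. F (Suc k) x = S k (F k x) x"
  shows "prc 2 (\<lambda>ys. F (ys!0) (ys!1))"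
proof -
  have "prc (Suc 1) (\<lambda>ys. (\<lambda>k (xs::nat list). F k (xs!0)) (hd ys) (tl ys))"
    by (rule prc_prim[of 1 "\<lambda>ys. B (ys!0)" "\<lambda>ys. S (ys!0) (ys!1) (ys!2)"])
       (use assms in \<open>auto simp: numeral_3_eq_3\<close>)
  then have h: "prc 2 (\<lambda>ys. F (hd ys) (tl ys ! 0))" by (simp add: numeral_2_eq_2)
  show ?thesis
    by (rule prc_cong[OF h]) (metis len2 list.sel(1,3) nth_Cons_0 nth_Cons_Suc One_nat_def)
qed



lemma prc_bin: "prc 2 (\<lambda>ys. \<Phi> (ys!0) (ys!1)) \<Longrightarrow> prc n g \<Longrightarrow> prc n h \<Longrightarrow> prc n (\<lambda>xs. \<Phi> (g xs) (h xs))"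
  using prc_comp2[of "\<lambda>ys. \<Phi> (ys!0) (ys!1)" n g h] by simp

lemma prc_un: "prc 1 (\<lambda>ys. \<Phi> (ys!0)) \<Longrightarrow> prc n g \<Longrightarrow> prc n (\<lambda>xs. \<Phi> (g xs))"
  using prc_comp1[of "\<lambda>ys. \<Phi> (ys!0)" n g] by simp

lemma prc_add2: "prc 2 (\<lambda>ys. ys!0 + ys!1)"
  by (rule prc_rec2[where B="\<lambda>x. x" and S="\<lambda>k v x. Suc v"]) (intro prc_proj prc_Suc | simp)+

lemma prc_add: "prc n g \<Longrightarrow> prc n h \<Longrightarrow> prc n (\<lambda>xs. g xs + h xs)"
  by (rule prc_bin[OF prc_add2])

lemma prc_pred1: "prc 1 (\<lambda>ys. ys!0 - 1)"
  by (rule prc_rec1[where S="\<lambda>k v. k" and c=0]) (intro prc_proj | simp)+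

lemma prc_sub2: "prc 2 (\<lambda>ys. ys!1 - ys!0)"
  by (rule prc_rec2[where F="\<lambda>y x. x - y" and B="\<lambda>x. x" and S="\<lambda>k v x. v - 1"])
     (intro prc_proj prc_un[OF prc_pred1] | simp)+

lemma prc_sub: "prc n g \<Longrightarrow> prc n h \<Longrightarrow> prc n (\<lambda>xs. g xs - h xs)"
  using prc_comp2[OF prc_sub2, of n h g] by simp

lemma prc_mult2: "prc 2 (\<lambda>ys. ys!0 * ys!1)"
  by (rule prc_rec2[where B="\<lambda>x. 0" and S="\<lambda>k v x. v + x"]) (intro prc_proj prc_add prc_const | simp add: algebra_simps)+

lemma prc_mult: "prc n g \<Longrightarrow> prc n h \<Longrightarrow> prc n (\<lambda>xs. g xs * h xs)"
  by (rule prc_bin[OF prc_mult2])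

lemma prc_pow1: "prc 1 (\<lambda>ys. 2 ^ (ys!0))"
  by (rule prc_rec1[where S="\<lambda>k v. v + v" and c=1]) (intro prc_proj prc_add | simp)+

lemma prc_pow: "prc n g \<Longrightarrow> prc n (\<lambda>xs. 2 ^ g xs)"
  by (rule prc_un[OF prc_pow1])

lemma prc_mod1: "prc 1 (\<lambda>ys. ys!0 mod 2)"
  by (rule prc_rec1[where S="\<lambda>k v. 1 - v" and c=0]) (intro prc_proj prc_sub prc_const | simp add: mod_Suc)+

lemma prc_mod: "prc n g \<Longrightarrow> prc n (\<lambda>xs. g xs mod 2)"
  by (rule prc_un[OF prc_mod1])

lemma prc_div1: "prc 1 (\<lambda>ys. ys!0 div 2)"
  by (rule prc_rec1[where S="\<lambda>k v. v + k mod 2" and c=0]) (intro prc_proj prc_add prc_mod | simp | presburger)+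

lemma prc_div: "prc n g \<Longrightarrow> prc n (\<lambda>xs. g xs div 2)"
  by (rule prc_un[OF prc_div1])

lemma prc_min1: "prc 1 (\<lambda>ys. min 1 (ys!0))"
  by (rule prc_rec1[where S="\<lambda>k v. 1" and c=0]) (intro prc_const | simp)+

lemma prc_min: "prc n g \<Longrightarrow> prc n (\<lambda>xs. min 1 (g xs))"
  by (rule prc_un[OF prc_min1])

lemma prc_max: "prc n g \<Longrightarrow> prc n h \<Longrightarrow> prc n (\<lambda>xs. max (g xs) (h xs))"
  by (rule prc_cong[OF prc_add[OF _ prc_sub], of n g h g]) auto

definition tlc :: "nat \<Rightarrow> nat" where "tlc v = (v - 1) div 2"
definition dr :: "nat \<Rightarrow> nat \<Rightarrow> nat" where "dr k x = (tlc ^^ k) x"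

lemma prc_dr2: "prc 2 (\<lambda>ys. dr (ys!0) (ys!1))"
  by (rule prc_rec2[where B="\<lambda>x. x" and S="\<lambda>k v x. (v - 1) div 2"])
     (intro prc_proj prc_div prc_sub prc_const | simp add: dr_def tlc_def)+

lemma prc_dr: "prc n g \<Longrightarrow> prc n h \<Longrightarrow> prc n (\<lambda>xs. dr (g xs) (h xs))"
  by (rule prc_bin[OF prc_dr2])

definition tk :: "nat \<Rightarrow> nat \<Rightarrow> nat" where "tk k x = x - 2 ^ k * dr k x"

lemma prc_tk: assumes g: "prc n g" and h: "prc n h" shows "prc n (\<lambda>xs. tk (g xs) (h xs))"
  unfolding tk_def by (rule prc_sub[OF h prc_mult[OF prc_pow[OF g] prc_dr[OF g h]]])

definition lenS :: "nat \<Rightarrow> nat \<Rightarrow> nat" where "lenS K x = (\<Sum>k<K. min 1 (dr k x))"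

lemma prc_lenS2: "prc 2 (\<lambda>ys. lenS (ys!0) (ys!1))"
  by (rule prc_rec2[where B="\<lambda>x. 0" and S="\<lambda>k v x. v + min 1 (dr k x)"])
     (intro prc_proj prc_add prc_min prc_dr prc_const | simp add: lenS_def)+

lemma prc_lenS: "prc n g \<Longrightarrow> prc n h \<Longrightarrow> prc n (\<lambda>xs. lenS (g xs) (h xs))"
  by (rule prc_bin[OF prc_lenS2])

definition Asum :: "(nat \<Rightarrow> nat) \<Rightarrow> nat \<Rightarrow> nat \<Rightarrow> nat" where "Asum L K x = (\<Sum>k<K. L (tk k x))"

lemma prc_Asum2: assumes L: "prc 1 (\<lambda>ys. L (ys!0))" shows "prc 2 (\<lambda>ys. Asum L (ys!0) (ys!1))"
  by (rule prc_rec2[where B="\<lambda>x. 0" and S="\<lambda>k v x. v + L (tk k x)"])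
     (intro prc_proj prc_add prc_un[where \<Phi>=L, OF L] prc_tk prc_const | simp add: Asum_def)+

lemma prc_Asum: "prc 1 (\<lambda>ys. L (ys!0)) \<Longrightarrow> prc n g \<Longrightarrow> prc n h \<Longrightarrow> prc n (\<lambda>xs. Asum L (g xs) (h xs))"
  by (rule prc_bin[OF prc_Asum2])



lemma enc_ge: "length s \<le> encode_bits s"
  by (induction s) auto

lemma enc_zero: "encode_bits s = 0 \<longleftrightarrow> s = []"
  by (cases s) auto

lemma enc_inj: "inj encode_bits"
proof (rule injI)
  fix s t show "encode_bits s = encode_bits t \<Longrightarrow> s = t"
  proof (induction s arbitrary: t)
    case Nil then show ?case by (simp add: enc_zero)
  next
    case (Cons a s)
    then show ?case
    proof (cases t)
      case Nil then show ?thesis using Cons.prems by (simp split: if_splits)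
    next
      case (Cons b t')
      have "a = b" using Cons.prems \<open>t = b # t'\<close> by (auto split: if_splits) presburger+
      then show ?thesis using Cons.prems Cons.IH \<open>t = b # t'\<close> by auto
    qed
  qed
qed

lemma enc_surj: "\<exists>s. encode_bits s = c"
proof (induction c rule: less_induct)
  case (less c)
  show ?case
  proof (cases "c = 0")
    case True then show ?thesis by (intro exI[of _ "[]"]) simp
  next
    case False
    show ?thesis
    proof (cases "odd c")
      case True
      have "(c - 1) div 2 < c" using False by presburger
      then obtain s where "encode_bits s = (c - 1) div 2" using less by blast
      then show ?thesis using True by (intro exI[of _ "False # s"]) auto
    next
      case ev: False
      have "(c - 2) div 2 < c" using False by presburger
      then obtain s where "encode_bits s = (c - 2) div 2" using less by blast
      then show ?thesis using ev False by (intro exI[of _ "True # s"]) auto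
    qed
  qed
qed

lemma tlc_enc: "tlc (encode_bits s) = encode_bits (tl s)"
  by (cases s) (auto simp: tlc_def)

lemma dr_enc: "dr k (encode_bits s) = encode_bits (drop k s)"
proof (induction k arbitrary: s)
  case 0 then show ?case by (simp add: dr_def)
next
  case (Suc k)
  have "dr (Suc k) (encode_bits s) = dr k (tlc (encode_bits s))"
    by (simp add: dr_def funpow_Suc_right del: funpow.simps)
  then show ?case using Suc by (simp add: tlc_enc drop_Suc)
qed

lemma enc_split: "encode_bits s = encode_bits (take k s) + 2 ^ k * encode_bits (drop k s)"
proof (induction s arbitrary: k)
  case Nil then show ?case by simp
next
  case (Cons a s)
  show ?case
  proof (cases k)
    case 0 then show ?thesis by simp
  next
    case (Suc j) then show ?thesis using Cons.IH[of j] by (simp add: algebra_simps)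
  qed
qed

lemma tk_enc: "tk k (encode_bits s) = encode_bits (take k s)"
  unfolding tk_def dr_enc using enc_split[of s k] by simp

lemma lenS_enc: "lenS K (encode_bits s) = min K (length s)"
proof (induction K)
  case 0 then show ?case by (simp add: lenS_def)
next
  case (Suc K)
  have "min 1 (dr K (encode_bits s)) = (if K < length s then 1 else 0)"
    using enc_ge[of "drop K s"] by (simp add: dr_enc enc_zero)
  then show ?case using Suc by (simp add: lenS_def)
qed

lemma len_enc: "lenS (encode_bits s) (encode_bits s) = length s"
  by (metis enc_ge lenS_enc min_absorb2)

definition Lc :: "learning_function \<Rightarrow> nat \<Rightarrow> nat" where
  "Lc l c = (if l (inv encode_bits c) then 1 else 0)"

lemma Lc_enc: "Lc l (encode_bits t) = (if l t then 1 else 0)"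
  by (simp add: Lc_def inv_f_f[OF enc_inj])

lemma cnt_Suc: "cnt l s (Suc K) = cnt l s K + (if l (take K s) then 1 else 0)"
proof -
  have "{k. k < Suc K \<and> l (take k s)} = (if l (take K s) then insert K else id) {k. k < K \<and> l (take k s)}"
    by (auto simp: less_Suc_eq)
  then show ?thesis unfolding cnt_def by simp
qed

lemma Asum_enc: "Asum (Lc l) K (encode_bits s) = cnt l s K"
  by (induction K) (auto simp: Asum_def cnt_Suc tk_enc Lc_enc, simp add: cnt_def)

definition Fin :: "learning_function \<Rightarrow> learning_function \<Rightarrow> nat \<Rightarrow> nat" where
  "Fin l1 l2 x = min 1 (max (Asum (Lc l1) (Suc (lenS x x)) x) (Asum (Lc l2) (Suc (lenS x x)) x)
       - max (Asum (Lc l1) (lenS x x) x) (Asum (Lc l2) (lenS x x) x))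
     * min 1 (max (Asum (Lc l1) (Suc (lenS x x)) x) (Asum (Lc l2) (Suc (lenS x x)) x) - 1)"

lemma Fin_enc: "Fin l1 l2 (encode_bits s) = (if l3f l1 l2 s then 1 else 0)"
  unfolding Fin_def len_enc Asum_enc l3f_def by (auto simp: min_def)

lemma prc_Lc: "computable_lf l \<Longrightarrow> prc 1 (\<lambda>ys. Lc l (ys!0))"
  unfolding computable_lf_def prc_def
proof (elim exE, intro exI allI impI)
  fix r ys assume r: "\<forall>s. eval_rf r [encode_bits s] (if l s then 1 else 0)" and ys: "length (ys::nat list) = 1"
  obtain s where s: "encode_bits s = ys ! 0" using enc_surj by blast
  have "ys = [encode_bits s]" using len1[OF ys] s by simp
  then show "eval_rf r ys (Lc l (ys ! 0))" using r s Lc_enc by metis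
qed

lemma comp3:
  assumes "computable_lf l1" "computable_lf l2"
  shows "computable_lf (l3f l1 l2)"
proof -
  note L1 = prc_Lc[OF assms(1)] and L2 = prc_Lc[OF assms(2)]
  have "prc 1 (\<lambda>ys. Fin l1 l2 (ys!0))"
    unfolding Fin_def
    by (rule prc_mult prc_min prc_sub prc_max prc_Asum[OF L1] prc_Asum[OF L2] prc_Suc prc_lenS prc_const | (rule prc_proj, simp))+
  then obtain r where r: "\<forall>xs. length xs = 1 \<longrightarrow> eval_rf r xs (Fin l1 l2 (xs!0))" unfolding prc_def by blast
  show ?thesis unfolding computable_lf_def
  proof (intro exI allI)
    fix s
    have "eval_rf r [encode_bits s] (Fin l1 l2 ([encode_bits s] ! 0))" using r[rule_format, of "[encode_bits s]"] by simp
    then show "eval_rf r [encode_bits s] (if l3f l1 l2 s then 1 else 0)" by (simp add: Fin_enc)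
  qed
qed

theorem mainTheorem3:
  fixes l1 l2 :: learning_function and \<Gamma>1 \<Gamma>2 :: "(nat \<Rightarrow> bool) set"
  assumes "uniformly_weakly_detects l1 \<Gamma>1"
      and "uniformly_weakly_detects l2 \<Gamma>2"
  shows "(\<exists>l3. uniformly_weakly_detects l3 (\<Gamma>1 \<union> \<Gamma>2)) \<and>
         (computable_lf l1 \<and> computable_lf l2 \<longrightarrow>
            (\<exists>l3. uniformly_weakly_detects l3 (\<Gamma>1 \<union> \<Gamma>2) \<and> computable_lf l3))"
  using detect[OF assms] comp3 by blast

end
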